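(* Let $u,v\in\mathbb{R}^n$ be nonzero and $A=uv^T$. Then $A$ is a Karamardian matrix if and only if $u$ is unisigned (i.e. $u\ge 0$ or $u\le 0$ entrywise) and $u^Tv>0$.
   Context: For $A\in\mathbb{R}^{n\times n}$ let $R(A)$, $N(A^T)$ denote the range of $A$ and null space of $A^T$, let $K_A=\mathbb{R}^n_+\cap R(A)$ and $K_A^*=\{y\in\mathbb{R}^n: x^Ty\ge 0 \text{ for all } x\in K_A\}$ (one has $K_A^*=\mathbb{R}^n_++N(A^T)$, and its interior is $\{a+b: a>0,\ b\in N(A^T)\}$). For $q\in\mathbb{R}^n$, the problem LCP$(A,K_A,q)$ is to find $x$ with $x\in K_A$, $Ax+q\in K_A^*$ and $x^T(Ax+q)=0$. $A$ is called a Karamardian matrix if $K_A\ne\{0\}$ and there exists $d$ in the interior of $K_A^*$ such that both LCP$(A,K_A,0)$ and LCP$(A,K_A,d)$ have $x=0$ as their only solution. *)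

theory Defs
  imports "HOL-Analysis.Analysis"
begin

definition nonneg_orthant :: "(real ^ 'n) set" where
  "nonneg_orthant = {x. \<forall>i. 0 \<le> x $ i}"

definition K_cone :: "real ^ 'n ^ 'n \<Rightarrow> (real ^ 'n) set" where
  "K_cone A = nonneg_orthant \<inter> range (\<lambda>x. A *v x)"

definition dual_cone :: "(real ^ 'n) set \<Rightarrow> (real ^ 'n) set" where
  "dual_cone K = {y. \<forall>x\<in>K. 0 \<le> x \<bullet> y}"

definition LCP_sol :: "real ^ 'n ^ 'n \<Rightarrow> (real ^ 'n) set \<Rightarrow> real ^ 'n \<Rightarrow> (real ^ 'n) set" where
  "LCP_sol A K q = {x. x \<in> K \<and> A *v x + q \<in> dual_cone K \<and> x \<bullet> (A *v x + q) = 0}"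

definition karamardian :: "real ^ 'n ^ 'n \<Rightarrow> bool" where
  "karamardian A \<longleftrightarrow> K_cone A \<noteq> {0} \<and>
     (\<exists>d \<in> interior (dual_cone (K_cone A)).
        LCP_sol A (K_cone A) 0 = {0} \<and> LCP_sol A (K_cone A) d = {0})"

definition outer :: "real ^ 'n \<Rightarrow> real ^ 'n \<Rightarrow> real ^ 'n ^ 'n" where
  "outer u v = (\<chi> i j. u $ i * v $ j)"

end

theory Submission
  imports Defs
begin

lemma outer_mult: "outer u v *v x = (v \<bullet> x) *\<^sub>R u"
  by (simp add: outer_def matrix_vector_mult_def inner_vec_def vec_eq_iff
      sum_distrib_left mult.assoc mult.commute mult.left_commute)

lemma outer_neg: "outer (-u) (-v) = outer u v"
  by (simp add: outer_def)

lemma K_nonzero_unisigned: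
  assumes "K_cone (outer u v) \<noteq> {0}"
  shows "(\<forall>i. 0 \<le> u $ i) \<or> (\<forall>i. u $ i \<le> 0)"
proof -
  have "0 \<in> K_cone (outer u v)"
    unfolding K_cone_def nonneg_orthant_def
    by (auto intro!: image_eqI[where x=0])
  with assms obtain x where x: "x \<in> K_cone (outer u v)" "x \<noteq> 0" by blast
  then obtain y where y: "x = (v \<bullet> y) *\<^sub>R u" and xn: "\<forall>i. 0 \<le> x $ i"
    unfolding K_cone_def nonneg_orthant_def by (auto simp: outer_mult)
  have "v \<bullet> y \<noteq> 0" using x(2) y by auto
  then show ?thesis
  proof (cases "v \<bullet> y > 0")
    case True
    have "0 \<le> u $ i" for i using xn[rule_format, of i] True y
      by (simp add: zero_le_mult_iff)
    then show ?thesis by blast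
  next
    case False
    with \<open>v \<bullet> y \<noteq> 0\<close> have neg: "v \<bullet> y < 0" by auto
    have "u $ i \<le> 0" for i using xn[rule_format, of i] neg y
      by (simp add: zero_le_mult_iff)
    then show ?thesis by blast
  qed
qed

lemma K_pos_sup:
  fixes u v :: "real ^ 'n"
  assumes u0: "\<forall>i. 0 \<le> u $ i" and "v \<noteq> 0" and t: "x = t *\<^sub>R u" "t \<ge> 0"
  shows "x \<in> K_cone (outer u v)"
proof -
    have vv: "v \<bullet> v \<noteq> 0" using \<open>v \<noteq> 0\<close> by simp
    have eq: "x = outer u v *v ((t / (v \<bullet> v)) *\<^sub>R v)"
      using vv t by (simp add: outer_mult)
    have r: "x \<in> range (\<lambda>x. outer u v *v x)" by (subst eq) (rule rangeI)
    have "x \<in> nonneg_orthant" using t u0 by (simp add: nonneg_orthant_def)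
    with r show ?thesis unfolding K_cone_def by blast
qed

lemma K_pos_sub:
  fixes u v :: "real ^ 'n"
  assumes u0: "\<forall>i. 0 \<le> u $ i" and "u \<noteq> 0" and x: "x \<in> K_cone (outer u v)"
  shows "\<exists>t. x = t *\<^sub>R u \<and> t \<ge> 0"
proof -
  obtain i where ui0: "u $ i \<noteq> 0" using \<open>u \<noteq> 0\<close> by (auto simp: vec_eq_iff)
  have ui: "u $ i > 0" using ui0 u0[rule_format, of i] by linarith
  obtain y where y0: "x = outer u v *v y" and xn: "\<forall>i. 0 \<le> x $ i"
    using x unfolding K_cone_def nonneg_orthant_def by auto
  have y: "x = (v \<bullet> y) *\<^sub>R u" using y0 by (simp add: outer_mult)
  have "0 \<le> (v \<bullet> y) * u $ i" using xn y by simp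
  with ui have "v \<bullet> y \<ge> 0" by (simp add: zero_le_mult_iff)
  with y show ?thesis by blast
qed

lemma K_pos:
  fixes u v :: "real ^ 'n"
  assumes u0: "\<forall>i. 0 \<le> u $ i" and "u \<noteq> 0" and "v \<noteq> 0"
  shows "K_cone (outer u v) = {t *\<^sub>R u | t. t \<ge> 0}"
  using K_pos_sub[OF u0 \<open>u \<noteq> 0\<close>] K_pos_sup[OF u0 \<open>v \<noteq> 0\<close>] by blast

lemma dual_ray:
  fixes u :: "real ^ 'n"
  shows "dual_cone {t *\<^sub>R u | t. t \<ge> 0} = {y. u \<bullet> y \<ge> 0}"
  unfolding dual_cone_def
  apply auto
  apply (metis order_refl scale_one zero_le_one)
  done

lemma interior_halfspace:
  fixes u d :: "real ^ 'n"
  assumes "u \<noteq> 0"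
  shows "d \<in> interior {y. u \<bullet> y \<ge> 0} \<longleftrightarrow> u \<bullet> d > 0"
proof
  assume d: "d \<in> interior {y. u \<bullet> y \<ge> 0}"
  then have ge: "u \<bullet> d \<ge> 0" using subsetD[OF interior_subset d] by simp
  show "u \<bullet> d > 0"
  proof (rule ccontr)
    assume "\<not> u \<bullet> d > 0"
    with ge have z: "u \<bullet> d = 0" by linarith
    from d obtain e where e: "e > 0" "ball d e \<subseteq> {y. u \<bullet> y \<ge> 0}"
      using d[unfolded mem_interior] by blast
    have nu: "norm u > 0" using assms by simp
    define c where "c = e / 2 / norm u"
    have c: "c > 0" unfolding c_def using nu e by simp
    define z' where "z' = d - c *\<^sub>R u"
    have "dist d z' = c * norm u" using c by (simp add: z'_def dist_norm)
    also have "\<dots> = e/2" using nu by (simp add: c_def)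
    finally have zb: "z' \<in> ball d e" using e by simp
    have "u \<bullet> z' \<ge> 0" using subsetD[OF e(2) zb] by simp
    moreover have "u \<bullet> z' = - c * (u \<bullet> u)"
      using z by (simp add: z'_def inner_diff_right)
    moreover have "u \<bullet> u > 0" using assms by simp
    moreover have "c * (u \<bullet> u) > 0" using c \<open>u \<bullet> u > 0\<close> by (rule mult_pos_pos)
    ultimately show False by linarith
  qed
next
  assume "u \<bullet> d > 0"
  then have "d \<in> {y. u \<bullet> y > 0}" by simp
  moreover have "{y. u \<bullet> y > 0} \<subseteq> interior {y. u \<bullet> y \<ge> 0}"
    by (rule interior_maximal) (auto intro: open_halfspace_gt)
  ultimately show "d \<in> interior {y. u \<bullet> y \<ge> 0}" by blast
qed


lemma LCP_char:
  fixes u v q :: "real ^ 'n"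
  shows "x \<in> LCP_sol (outer u v) {t *\<^sub>R u | t. t \<ge> 0} q \<longleftrightarrow>
    (\<exists>t. t \<ge> 0 \<and> x = t *\<^sub>R u \<and> 0 \<le> t * (u \<bullet> v) * (u \<bullet> u) + u \<bullet> q
       \<and> t * (t * (u \<bullet> v) * (u \<bullet> u) + u \<bullet> q) = 0)"
proof -
  have A: "outer u v *v (t *\<^sub>R u) + q = (t * (u \<bullet> v)) *\<^sub>R u + q" for t
    by (simp add: outer_mult inner_commute)
  have i1: "u \<bullet> ((t * (u \<bullet> v)) *\<^sub>R u + q) = t * (u \<bullet> v) * (u \<bullet> u) + u \<bullet> q" for t
    by (simp add: inner_add_right)
  have i2: "(t *\<^sub>R u) \<bullet> ((t * (u \<bullet> v)) *\<^sub>R u + q) = t * (t * (u \<bullet> v) * (u \<bullet> u) + u \<bullet> q)" for t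
    by (simp add: inner_add_right algebra_simps)
  show ?thesis
    unfolding LCP_sol_def dual_ray
    using A i1 i2 by auto
qed

lemma main_pos:
  fixes u v :: "real ^ 'n"
  assumes u0: "\<forall>i. 0 \<le> u $ i" and "u \<noteq> 0" and "v \<noteq> 0"
  shows "karamardian (outer u v) \<longleftrightarrow> u \<bullet> v > 0"
proof -
  have K: "K_cone (outer u v) = {t *\<^sub>R u | t. t \<ge> 0}" by (rule K_pos[OF assms])
  have N: "u \<bullet> u > 0" using assms by simp
  have uK: "u \<in> K_cone (outer u v)" unfolding K by (auto intro!: exI[of _ 1])
  have int: "d \<in> interior (dual_cone (K_cone (outer u v))) \<longleftrightarrow> u \<bullet> d > 0" for d
    unfolding K dual_ray by (rule interior_halfspace[OF \<open>u \<noteq> 0\<close>])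
  show ?thesis
  proof
    assume ka: "karamardian (outer u v)"
    then obtain d where d0: "d \<in> interior (dual_cone (K_cone (outer u v)))"
      and l0: "LCP_sol (outer u v) (K_cone (outer u v)) 0 = {0}"
      and ld: "LCP_sol (outer u v) (K_cone (outer u v)) d = {0}"
      unfolding karamardian_def by auto
    have d: "u \<bullet> d > 0" using d0 int by simp
    show "u \<bullet> v > 0"
    proof (rule ccontr)
      assume "\<not> u \<bullet> v > 0"
      then consider "u \<bullet> v = 0" | "u \<bullet> v < 0" by linarith
      then show False
      proof cases
        case 1
        have "u \<in> LCP_sol (outer u v) (K_cone (outer u v)) 0"
          unfolding K LCP_char using 1 by (auto intro!: exI[of _ 1])
        then have "u = 0" using l0 by simp
        with \<open>u \<noteq> 0\<close> show False by simp
      next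
        case 2
        define t where "t = - (u \<bullet> d) / ((u \<bullet> v) * (u \<bullet> u))"
        have cn: "(u \<bullet> v) * (u \<bullet> u) < 0" using 2 N by (simp add: mult_neg_pos)
        have tpos: "t > 0" unfolding t_def using cn d by (simp add: divide_pos_neg)
        have e: "t * (u \<bullet> v) * (u \<bullet> u) + u \<bullet> d = 0"
        proof -
          have gen: "(- a / X) * X = - a" if "X \<noteq> 0" for a X :: real
            using that by simp
          have "t * ((u \<bullet> v) * (u \<bullet> u)) = - (u \<bullet> d)"
            unfolding t_def by (rule gen) (use cn in linarith)
          then show ?thesis by (simp add: mult.assoc)
        qed
        have "t *\<^sub>R u \<in> LCP_sol (outer u v) (K_cone (outer u v)) d"
          unfolding K LCP_char using e tpos by (intro exI[of _ t]) simp
        then have "t *\<^sub>R u = 0" using ld by simp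
        with tpos \<open>u \<noteq> 0\<close> show False by simp
      qed
    qed
  next
    assume c: "u \<bullet> v > 0"
    have l0: "LCP_sol (outer u v) (K_cone (outer u v)) 0 = {0}"
    proof (rule set_eqI)
      fix x
      show "x \<in> LCP_sol (outer u v) (K_cone (outer u v)) 0 \<longleftrightarrow> x \<in> {0}"
      proof
        assume "x \<in> LCP_sol (outer u v) (K_cone (outer u v)) 0"
        then obtain t where t: "t \<ge> 0" "x = t *\<^sub>R u"
          "t * (t * (u \<bullet> v) * (u \<bullet> u) + u \<bullet> 0) = 0"
          unfolding K LCP_char by blast
        have pos: "(u \<bullet> v) * (u \<bullet> u) > 0" using c N by simp
        have P: "(t * t) * ((u \<bullet> v) * (u \<bullet> u)) = 0" using t(3)
          by (simp only: inner_zero_right add_0_right mult.assoc)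
        have "t = 0" using P pos by (metis mult_eq_0_iff less_irrefl)
        with t show "x \<in> {0}" by simp
      next
        assume "x \<in> {0}"
        then show "x \<in> LCP_sol (outer u v) (K_cone (outer u v)) 0"
          unfolding K LCP_char by (auto intro!: exI[of _ 0])
      qed
    qed
    have lu: "LCP_sol (outer u v) (K_cone (outer u v)) u = {0}"
    proof (rule set_eqI)
      fix x
      show "x \<in> LCP_sol (outer u v) (K_cone (outer u v)) u \<longleftrightarrow> x \<in> {0}"
      proof
        assume "x \<in> LCP_sol (outer u v) (K_cone (outer u v)) u"
        then obtain t where t: "t \<ge> 0" "x = t *\<^sub>R u"
          "t * (t * (u \<bullet> v) * (u \<bullet> u) + u \<bullet> u) = 0"
          unfolding K LCP_char by blast
        have "t * (u \<bullet> v) * (u \<bullet> u) \<ge> 0" using t c N by simp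
        then have "t * (u \<bullet> v) * (u \<bullet> u) + u \<bullet> u > 0" using N by linarith
        with t have "t = 0" by simp
        with t show "x \<in> {0}" by simp
      next
        assume "x \<in> {0}"
        then show "x \<in> LCP_sol (outer u v) (K_cone (outer u v)) u"
          unfolding K LCP_char using N by (auto intro!: exI[of _ 0])
      qed
    qed
    have "K_cone (outer u v) \<noteq> {0}" using uK \<open>u \<noteq> 0\<close> by auto
    moreover have "u \<in> interior (dual_cone (K_cone (outer u v)))" using int N by simp
    ultimately show "karamardian (outer u v)"
      unfolding karamardian_def using l0 lu by auto
  qed
qed

theorem mainTheorem6:
  fixes u v :: "real ^ 'n"
  assumes "u \<noteq> 0" and "v \<noteq> 0"
  shows "karamardian (outer u v) \<longleftrightarrow>
           ((\<forall>i. 0 \<le> u $ i) \<or> (\<forall>i. u $ i \<le> 0)) \<and> u \<bullet> v > 0"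
proof (cases "\<forall>i. 0 \<le> u $ i")
  case True
  then show ?thesis using main_pos[OF True assms] by simp
next
  case F: False
  show ?thesis
  proof (cases "\<forall>i. u $ i \<le> 0")
    case True
    have u0: "\<forall>i. 0 \<le> (-u) $ i" using True by simp
    have "karamardian (outer (-u) (-v)) \<longleftrightarrow> (-u) \<bullet> (-v) > 0"
      by (rule main_pos[OF u0]) (use assms in simp_all)
    then show ?thesis using True by (simp add: outer_neg)
  next
    case False
    have "\<not> karamardian (outer u v)"
      using K_nonzero_unisigned[of u v] F False unfolding karamardian_def by blast
    then show ?thesis using F False by simp
  qed
qed

end
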